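(* Let $\varrho_\pm,p_\pm>0$ with $\varrho_-<\varrho_+$, and fix $\varrho_1>\varrho_+$. For $v_\pm\in\mathbb{R}$ set $u=v_--v_+$, $R=\varrho_--\varrho_+$, $A=\varrho_-v_--\varrho_+v_+$, $B=\varrho_-\varrho_+u^2-(\varrho_+-\varrho_-)(p_+-p_-)$, and, whenever $B>0$, $$\mu_0=\frac AR-\frac1R\sqrt{B\frac{\varrho_1-\varrho_+}{\varrho_1-\varrho_-}},\qquad \mu_1=\frac AR-\frac1R\sqrt{B\frac{\varrho_1-\varrho_-}{\varrho_1-\varrho_+}}.$$ Then for $u$ sufficiently large (depending only on $\varrho_\pm,p_\pm,\varrho_1$) one has $B>0$ and $$v_--\mu_0>0\qquad\text{and}\qquad \mu_1-v_+>0.$$ *)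

theory Defs
  imports Complex_Main
begin
end

theory Submission
  imports Defs
begin

theorem lemma6p1:
  fixes rho_m rho_p p_m p_p rho1 :: real
  assumes "rho_m > 0" "rho_p > 0" "p_m > 0" "p_p > 0"
    and "rho_m < rho_p" and "rho1 > rho_p"
  shows "\<exists>U::real. \<forall>v_m v_p :: real. v_m - v_p \<ge> U \<longrightarrow>
    (let u = v_m - v_p;
         R = rho_m - rho_p;
         A = rho_m * v_m - rho_p * v_p;
         B = rho_m * rho_p * u^2 - (rho_p - rho_m) * (p_p - p_m);
         mu0 = A / R - (1 / R) * sqrt (B * ((rho1 - rho_p) / (rho1 - rho_m)));
         mu1 = A / R - (1 / R) * sqrt (B * ((rho1 - rho_m) / (rho1 - rho_p)))
     in B > 0 \<and> v_m - mu0 > 0 \<and> mu1 - v_p > 0)"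
proof -
  define r where "r = rho_p - rho_m"
  define d where "d = p_p - p_m"
  define k0 where "k0 = (rho1 - rho_p) / (rho1 - rho_m)"
  define k1 where "k1 = (rho1 - rho_m) / (rho1 - rho_p)"
  have r0: "r > 0" using assms r_def by simp
  have k00: "k0 > 0" "k0 < 1" using assms unfolding k0_def by (auto simp: divide_simps)
  have k11: "k1 > 1" using assms unfolding k1_def by (auto simp: divide_simps)
  define a1 where "a1 = rho_m * rho_p"
  define a2 where "a2 = rho_p^2 - k0*rho_m*rho_p"
  define a3 where "a3 = rho_m*(k1*rho_p - rho_m)"
  have a1p: "a1 > 0" using assms a1_def by simp
  have "k0*(rho_m*rho_p) < rho_m*rho_p" using mult_strict_right_mono[OF k00(2) a1p] a1_def by simp
  moreover have "rho_m*rho_p < rho_p*rho_p" using assms by simp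
  ultimately have a2p: "a2 > 0" unfolding a2_def power2_eq_square by (simp add: mult.assoc)
  have "k1*rho_p > 1*rho_p" using mult_strict_right_mono[OF k11 assms(2)] .
  hence "k1*rho_p - rho_m > 0" using assms by linarith
  hence a3p: "a3 > 0" using assms(1) a3_def by simp
  define U where "U = 1 + \<bar>r*d\<bar>/a1 + \<bar>k0*r*d\<bar>/a2 + \<bar>k1*r*d\<bar>/a3"
  show ?thesis
  proof (intro exI allI impI)
    fix v_m v_p :: real
    assume uU: "v_m - v_p \<ge> U"
    define u where "u = v_m - v_p"
    have U1: "U \<ge> 1" using a1p a2p a3p unfolding U_def by (simp add: add_nonneg_nonneg)
    have u1: "u \<ge> 1" using uU U1 u_def by simp
    have uu: "u^2 \<ge> u" using u1 unfolding power2_eq_square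
      using mult_right_mono[OF u1, of u] by simp
    have uU2: "u^2 \<ge> U" using uu uU u_def by simp
    have nn: "\<bar>r*d\<bar>/a1 \<ge> 0" "\<bar>k0*r*d\<bar>/a2 \<ge> 0" "\<bar>k1*r*d\<bar>/a3 \<ge> 0"
      using a1p a2p a3p by simp_all
    have t1: "\<bar>r*d\<bar>/a1 < u^2" using uU2 nn unfolding U_def by linarith
    have t2: "\<bar>k0*r*d\<bar>/a2 < u^2" using uU2 nn unfolding U_def by linarith
    have t3: "\<bar>k1*r*d\<bar>/a3 < u^2" using uU2 nn unfolding U_def by linarith
    have "\<bar>r*d\<bar> < a1*u^2" using t1 a1p by (simp add: divide_simps mult.commute)
    hence e1: "r*d < a1*u^2" using abs_ge_self[of "r*d"] by linarith
    have "\<bar>k0*r*d\<bar> < a2*u^2" using t2 a2p by (simp add: divide_simps mult.commute)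
    hence e2: "-(k0*r*d) < a2*u^2" using abs_ge_minus_self[of "k0*r*d"] by linarith
    have "\<bar>k1*r*d\<bar> < a3*u^2" using t3 a3p by (simp add: divide_simps mult.commute)
    hence e3: "k1*r*d < a3*u^2" using abs_ge_self[of "k1*r*d"] by linarith
    define B where "B = rho_m * rho_p * u^2 - (rho_p - rho_m) * (p_p - p_m)"
    have B0: "B > 0" using e1 unfolding B_def a1_def r_def d_def by simp
    have hB: "B = a1*u^2 - r*d" unfolding B_def a1_def r_def d_def by simp
    have s0: "B*k0 < (rho_p*u)^2"
    proof -
      have "(rho_p*u)^2 - B*k0 = a2*u^2 + k0*r*d" unfolding hB a2_def a1_def
        by (simp add: algebra_simps power2_eq_square)
      thus ?thesis using e2 by linarith
    qed
    have s1: "(rho_m*u)^2 < B*k1"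
    proof -
      have "B*k1 - (rho_m*u)^2 = a3*u^2 - k1*r*d" unfolding hB a3_def a1_def
        by (simp add: algebra_simps power2_eq_square)
      thus ?thesis using e3 by linarith
    qed
    have pu: "rho_p*u > 0" "rho_m*u > 0" using u1 assms(1,2) by simp_all
    have q0: "sqrt (B*k0) < rho_p*u"
      using real_sqrt_less_mono[OF s0] pu by simp
    have q1: "rho_m*u < sqrt (B*k1)"
      using real_sqrt_less_mono[OF s1] pu by simp
    have R: "rho_m - rho_p = - r" using r_def by simp
    have hv: "v_m = u + v_p" "rho_p = r + rho_m" using u_def r_def by simp_all
    note hr = hv(2)
    note hv = hv(1)
    have v0: "v_m - ((rho_m * v_m - rho_p * v_p) / (rho_m - rho_p) - (1 / (rho_m - rho_p)) * sqrt (B*k0))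
       = (rho_p*u - sqrt (B*k0)) / r"
      unfolding R using r0 by (simp add: hv hr field_simps)
    have v1: "(rho_m * v_m - rho_p * v_p) / (rho_m - rho_p) - (1 / (rho_m - rho_p)) * sqrt (B*k1) - v_p
       = (sqrt (B*k1) - rho_m*u) / r"
      unfolding R using r0 by (simp add: hv hr field_simps)
    show "let u = v_m - v_p;
         R = rho_m - rho_p;
         A = rho_m * v_m - rho_p * v_p;
         B = rho_m * rho_p * u^2 - (rho_p - rho_m) * (p_p - p_m);
         mu0 = A / R - (1 / R) * sqrt (B * ((rho1 - rho_p) / (rho1 - rho_m)));
         mu1 = A / R - (1 / R) * sqrt (B * ((rho1 - rho_m) / (rho1 - rho_p)))
     in B > 0 \<and> v_m - mu0 > 0 \<and> mu1 - v_p > 0"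
      unfolding Let_def u_def[symmetric] B_def[symmetric] k0_def[symmetric] k1_def[symmetric] v0 v1
      using B0 q0 q1 r0 by simp
  qed
qed

end
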